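(* Let $A \in \mathbb{R}^{d\times d}$ be invertible, $\bm{b}\in\mathbb{R}^d$, $\bm{x}^\ast=A^{-1}\bm{b}$, $\bm{x}_0\in\mathbb{R}^d$ with $\bm{x}_0\neq\bm{x}^\ast$, and $\Sigma_0$ symmetric positive-definite. Let $S_m\in\mathbb{R}^{d\times m}$ have linearly independent columns, $\Lambda_m=S_m^\top A\Sigma_0A^\top S_m$, $\bm{r}_0=\bm{b}-A\bm{x}_0$, and \[\bm{x}_m=\bm{x}_0+\Sigma_0A^\top S_m\Lambda_m^{-1}S_m^\top\bm{r}_0,\qquad \Sigma_m=\Sigma_0-\Sigma_0A^\top S_m\Lambda_m^{-1}S_m^\top A\Sigma_0.\] Then \[\frac{\|\bm{x}_m-\bm{x}^\ast\|_{\Sigma_0^{-1}}}{\|\bm{x}_0-\bm{x}^\ast\|_{\Sigma_0^{-1}}}\le\sqrt{\operatorname{tr}(\Sigma_m\Sigma_0^{-1})}.\]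
   Context: For a symmetric positive-definite matrix $M$, $\|\bm{v}\|_M=\sqrt{\bm{v}^\top M\bm{v}}$. $\bm{x}_m,\Sigma_m$ are the mean and covariance of the posterior obtained by conditioning the prior $\mathcal{N}(\bm{x}_0,\Sigma_0)$ on $S_m^\top A\bm{x}=S_m^\top\bm{b}$. *)

theory Defs
  imports "HOL-Analysis.Analysis"
begin

text \<open>Weighted norm \<open>\<parallel>v\<parallel>_M = sqrt (v^T M v)\<close>.\<close>
definition mnorm :: "real^'n^'n \<Rightarrow> real^'n \<Rightarrow> real" where
  "mnorm M v = sqrt (v \<bullet> (M *v v))"

definition sym_pos_def_mat :: "real^'n^'n \<Rightarrow> bool" where
  "sym_pos_def_mat M \<longleftrightarrow> transpose M = M \<and> (\<forall>v. v \<noteq> 0 \<longrightarrow> v \<bullet> (M *v v) > 0)"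

text \<open>Columns of S are linearly independent: only the trivial combination vanishes.\<close>
definition lin_indep_columns :: "real^'m^'d \<Rightarrow> bool" where
  "lin_indep_columns S \<longleftrightarrow> (\<forall>c. S *v c = 0 \<longrightarrow> c = 0)"

end

theory Submission
  imports Defs
begin

lemma inv_facts:
  fixes M :: "real^'n^'n"
  assumes "invertible M"
  shows "M ** matrix_inv M = mat 1" "matrix_inv M ** M = mat 1"
proof -
  have "\<exists>M'. M ** M' = mat 1 \<and> M' ** M = mat 1" using assms by (simp add: invertible_def)
  then have "M ** matrix_inv M = mat 1 \<and> matrix_inv M ** M = mat 1"
    unfolding matrix_inv_def by (rule someI_ex)
  then show "M ** matrix_inv M = mat 1" "matrix_inv M ** M = mat 1" by auto
qed

lemma inv_vec:
  fixes M :: "real^'n^'n"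
  assumes "invertible M"
  shows "M *v (matrix_inv M *v v) = v" "matrix_inv M *v (M *v v) = v"
  using inv_facts[OF assms] by (simp_all add: matrix_vector_mul_assoc)

lemma inj_invertible:
  fixes M :: "real^'n^'n"
  assumes "\<And>x. M *v x = 0 \<Longrightarrow> x = 0"
  shows "invertible M"
  using assms invertible_left_inverse matrix_left_invertible_ker by blast

lemma dot_transp:
  fixes M :: "real^'n^'m"
  shows "x \<bullet> (M *v y) = (transpose M *v x) \<bullet> y"
  by (metis dot_lmul_matrix transpose_transpose vector_transpose_matrix)

lemma sub_rdistrib:
  fixes X Y :: "real^'n^'m" and W :: "real^'k^'n"
  shows "(X - Y) ** W = X ** W - Y ** W"
  by (simp add: matrix_matrix_mult_def vec_eq_iff algebra_simps sum_subtractf)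

lemma mv_neg:
  fixes M :: "real^'n^'m"
  shows "M *v (- x) = - (M *v x)"
  using matrix_vector_mult_diff_distrib[of M 0 x] by simp

theorem proposition2:
  fixes A Sigma0 :: "real^'d^'d" and b x0 :: "real^'d" and S :: "real^'m^'d"
  assumes "invertible A"
    and "x0 \<noteq> matrix_inv A *v b"
    and "sym_pos_def_mat Sigma0"
    and "lin_indep_columns S"
  shows "let xstar = matrix_inv A *v b;
             Lambda = transpose S ** A ** Sigma0 ** transpose A ** S;
             r0 = b - A *v x0;
             xm = x0 + (Sigma0 ** transpose A ** S ** matrix_inv Lambda ** transpose S) *v r0;
             Sigmam = Sigma0 - Sigma0 ** transpose A ** S ** matrix_inv Lambda ** transpose S ** A ** Sigma0
         in mnorm (matrix_inv Sigma0) (xm - xstar) / mnorm (matrix_inv Sigma0) (x0 - xstar)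
              \<le> sqrt (trace (Sigmam ** matrix_inv Sigma0))"
proof -
  define Sg where "Sg = Sigma0"
  define W where "W = matrix_inv Sg"
  define La where "La = transpose S ** A ** Sigma0 ** transpose A ** S"
  define L where "L = matrix_inv La"
  define xstar where "xstar = matrix_inv A *v b"
  define e where "e = x0 - xstar"
  have symS: "transpose Sg = Sg" and pd: "\<And>v. v \<noteq> 0 \<Longrightarrow> v \<bullet> (Sg *v v) > 0"
    using assms(3) unfolding sym_pos_def_mat_def Sg_def by auto
  have psd: "v \<bullet> (Sg *v v) \<ge> 0" for v
    using pd[of v] by (cases "v = 0") auto
  have Sginv: "invertible Sg"
  proof (rule inj_invertible)
    fix v assume "Sg *v v = 0"
    then show "v = 0" using pd[of v] by (cases "v = 0") auto
  qed
  have SgW: "\<And>v. Sg *v (W *v v) = v" and WSg: "\<And>v. W *v (Sg *v v) = v"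
    using inv_vec[OF Sginv] W_def by auto
  have SgWm: "Sg ** W = mat 1" using inv_facts[OF Sginv] W_def by auto
  have Wpsd: "\<And>v. v \<bullet> (W *v v) \<ge> 0"
  proof -
    fix v
    have "v \<bullet> (W *v v) = (Sg *v (W *v v)) \<bullet> (W *v v)" by (simp add: SgW)
    also have "\<dots> = (W *v v) \<bullet> (Sg *v (W *v v))" by (simp add: inner_commute)
    finally show "v \<bullet> (W *v v) \<ge> 0" using psd by simp
  qed
  have AtI: "invertible (transpose A)" by (rule transpose_invertible[OF assms(1)])
  have Lav: "\<And>c. La *v c = transpose S *v (A *v (Sg *v (transpose A *v (S *v c))))"
    by (simp add: La_def Sg_def matrix_vector_mul_assoc[symmetric])
  have Lainj: "\<And>c. La *v c = 0 \<Longrightarrow> c = 0"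
  proof -
    fix c assume h: "La *v c = 0"
    define y where "y = transpose A *v (S *v c)"
    have "c \<bullet> (La *v c) = (S *v c) \<bullet> (A *v (Sg *v y))"
      unfolding Lav y_def using dot_transp[of c "transpose S"] by simp
    also have "\<dots> = y \<bullet> (Sg *v y)"
      unfolding y_def using dot_transp[of "S *v c" A] by simp
    finally have "c \<bullet> (La *v c) = y \<bullet> (Sg *v y)" .
    with h have "y \<bullet> (Sg *v y) = 0" by simp
    then have "y = 0" using pd[of y] by (cases "y = 0") auto
    then have "S *v c = 0" using inv_vec(2)[OF AtI, of "S *v c"] y_def by simp
    then show "c = 0" using assms(4) unfolding lin_indep_columns_def by blast
  qed
  have Lainv: "invertible La" by (rule inj_invertible[OF Lainj])
  have LaL: "\<And>v. La *v (L *v v) = v" and LLa: "\<And>v. L *v (La *v v) = v"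
    using inv_vec[OF Lainv] L_def by auto
  have LaLm: "La ** L = mat 1" using inv_facts[OF Lainv] L_def by auto
  define u where "u = L *v (transpose S *v (A *v e))"
  define y where "y = transpose A *v (S *v u)"
  define p where "p = Sg *v y"
  define q where "q = e - p"
  have Axs: "A *v xstar = b" using inv_vec(1)[OF assms(1)] xstar_def by simp
  have r0: "b - A *v x0 = - (A *v e)"
    by (simp add: e_def Axs[symmetric] matrix_vector_mult_diff_distrib)
  have xm: "x0 + (Sigma0 ** transpose A ** S ** L ** transpose S) *v (b - A *v x0) - xstar = q"
  proof -
    have "(Sigma0 ** transpose A ** S ** L ** transpose S) *v (b - A *v x0) = - p"
      unfolding r0 p_def y_def u_def Sg_def
      by (simp only: matrix_vector_mul_assoc[symmetric] mv_neg)
    then show ?thesis by (simp add: q_def e_def)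
  qed
  have key: "transpose S *v (A *v q) = 0"
  proof -
    have "transpose S *v (A *v p) = La *v u" unfolding p_def y_def Lav ..
    also have "\<dots> = transpose S *v (A *v e)" unfolding u_def LaL ..
    finally show ?thesis by (simp add: q_def matrix_vector_mult_diff_distrib)
  qed
  have Wp: "W *v p = y" unfolding p_def WSg ..
  have qy: "q \<bullet> y = 0"
  proof -
    have "q \<bullet> y = (A *v q) \<bullet> (S *v u)" unfolding y_def
      using dot_transp[of q "transpose A"] by simp
    also have "\<dots> = (transpose S *v (A *v q)) \<bullet> u" by (rule dot_transp)
    finally show ?thesis using key by simp
  qed
  have pWq: "p \<bullet> (W *v q) = 0"
  proof -
    have "p \<bullet> (W *v q) = (W *v q) \<bullet> (Sg *v y)" unfolding p_def by (simp add: inner_commute)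
    also have "\<dots> = (transpose Sg *v (W *v q)) \<bullet> y" by (rule dot_transp)
    also have "\<dots> = y \<bullet> (transpose Sg *v (W *v q))" by (simp add: inner_commute)
    also have "\<dots> = y \<bullet> q" by (simp add: symS SgW)
    finally show ?thesis using qy by (simp add: inner_commute)
  qed
  have eq: "e \<bullet> (W *v e) = q \<bullet> (W *v q) + p \<bullet> (W *v p)"
  proof -
    have "e = q + p" by (simp add: q_def)
    then have "e \<bullet> (W *v e) = (q + p) \<bullet> (W *v q + W *v p)"
      by (simp add: matrix_vector_right_distrib)
    also have "\<dots> = q \<bullet> (W *v q) + p \<bullet> (W *v p)"
      using pWq qy Wp by (simp add: inner_add_left inner_add_right)
    finally show ?thesis .
  qed
  define N where "N = sqrt (q \<bullet> (W *v q))"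
  define D where "D = sqrt (e \<bullet> (W *v e))"
  have N0: "N \<ge> 0" unfolding N_def using Wpsd by simp
  have ND: "N \<le> D" unfolding N_def D_def eq using Wpsd[of p] by simp
  have ratio: "N / D \<le> 1"
  proof (cases "D = 0")
    case True then show ?thesis by simp
  next
    case False then show ?thesis using N0 ND by simp
  qed
  \<comment> \<open>trace\<close>
  have T1: "(Sg - Sg ** transpose A ** S ** L ** transpose S ** A ** Sg) ** W
      = mat 1 - (Sg ** transpose A ** S ** L) ** (transpose S ** A)"
    by (simp add: sub_rdistrib SgWm matrix_mul_assoc[symmetric])
  have T2: "trace ((Sg ** transpose A ** S ** L) ** (transpose S ** A)) = real CARD('m)"
  proof -
    have "trace ((Sg ** transpose A ** S ** L) ** (transpose S ** A))
        = trace ((transpose S ** A) ** (Sg ** transpose A ** S ** L))" by (rule trace_mul_sym)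
    also have "(transpose S ** A) ** (Sg ** transpose A ** S ** L) = La ** L"
      by (simp add: La_def Sg_def matrix_mul_assoc)
    finally show ?thesis by (simp add: LaLm trace_I)
  qed
  have tr: "trace ((Sg - Sg ** transpose A ** S ** L ** transpose S ** A ** Sg) ** W)
      = real CARD('d) - real CARD('m)"
    unfolding T1 trace_sub T2 by (simp add: trace_I)
  have injS: "inj ((*v) S)"
    using assms(4) unfolding lin_indep_columns_def
    by (metis matrix_left_invertible_injective matrix_left_invertible_ker)
  have rk: "rank S = CARD('m)" using full_rank_injective injS by blast
  have le: "CARD('m) \<le> CARD('d)" using rank_bound[of S] rk by simp
  have main: "N / D \<le> sqrt (real CARD('d) - real CARD('m))"
  proof (cases "CARD('m) < CARD('d)")
    case True
    then have "1 \<le> real CARD('d) - real CARD('m)" by linarith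
    then have "1 \<le> sqrt (real CARD('d) - real CARD('m))" by simp
    then show ?thesis using ratio by linarith
  next
    case False
    then have eqc: "CARD('m) = CARD('d)" using le by simp
    then have "surj ((*v) S)" using full_rank_surjective rk by metis
    then obtain c where c: "S *v c = matrix_inv (transpose A) *v (W *v e)" by (metis surjD)
    have ec: "e = Sg *v (transpose A *v (S *v c))"
      unfolding c inv_vec(1)[OF AtI] SgW by (rule refl)
    have "u = c" unfolding u_def
      by (metis ec Lav LLa)
    then have "q = 0" unfolding q_def p_def y_def using ec by simp
    then have "N = 0" unfolding N_def by simp
    then show ?thesis by (simp add: eqc)
  qed
  show ?thesis
    unfolding Let_def
    using main xm tr
    by (simp add: mnorm_def N_def D_def e_def W_def L_def La_def Sg_def xstar_def)
qed

end
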